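(* Let $X$ and $Y$ be normed linear spaces and let $T : X \to Y$ be a bounded linear operator. Let $E$ be a linear subspace of $X$ that is a core of $T$, i.e. the graph of the restriction $T|_E$ is dense in the graph of $T$ (in $X \times Y$). Then \[ \Gamma(T|_E) = \Gamma(T), \quad \Delta(T|_E) = \Delta(T), \quad \tau(T|_E) = \tau(T), \quad \nabla(T|_E) = \nabla(T), \] where $T|_E : E \to Y$ is regarded as a bounded linear operator on the normed space $E$ (with the norm of $X$).
   Context: For a normed linear space $D$, let $\mathcal{I}(D)$ denote the collection of infinite dimensional linear subspaces of $D$. For a linear subspace $M$ of $D$, let $S_M = \{ m \in M : \|m\| = 1\}$. For a bounded linear operator $S : D \to Y$ and a subspace $M$ of $D$, $S|_M$ denotes the restriction of $S$ to $M$ and $\|S|_M\|$ its operator norm. Define \[ \Gamma(S) = \inf_{M \in \mathcal{I}(D)} \|S|_M\|, \qquad \Delta(S) = \sup_{M \in \mathcal{I}(D)} \Gamma(S|_M), \] \[ \tau(S) = \sup_{M \in \mathcal{I}(D)} \inf_{m \in S_M} \|Sm\|, \qquad \nabla(S) = \inf_{M \in \mathcal{I}(D)} \tau(S|_M), \] where for $M \in \mathcal{I}(D)$ the quantities $\Gamma(S|_M)$ and $\tau(S|_M)$ are computed with $D$ replaced by $M$ (so the infimum/supremum ranges over $\mathcal{I}(M)$). *)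

theory Defs
  imports "HOL-Analysis.Analysis"
begin

definition infdim_subspaces :: "'a::real_vector set \<Rightarrow> 'a set set" where
  "infdim_subspaces D = {M. subspace M \<and> M \<subseteq> D \<and> \<not> (\<exists>B. finite B \<and> span B = M)}"

definition unit_sphere_of :: "'a::real_normed_vector set \<Rightarrow> 'a set" where
  "unit_sphere_of M = {m \<in> M. norm m = 1}"

definition opnorm_on :: "'a::real_normed_vector set \<Rightarrow> ('a \<Rightarrow> 'b::real_normed_vector) \<Rightarrow> real" where
  "opnorm_on M S = (SUP m \<in> unit_sphere_of M. norm (S m))"

text \<open>The quantities, for an operator S regarded on the domain D (a subspace).\<close>
definition Gamma_op :: "'a::real_normed_vector set \<Rightarrow> ('a \<Rightarrow> 'b::real_normed_vector) \<Rightarrow> real" where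
  "Gamma_op D S = (INF M \<in> infdim_subspaces D. opnorm_on M S)"

definition Delta_op :: "'a::real_normed_vector set \<Rightarrow> ('a \<Rightarrow> 'b::real_normed_vector) \<Rightarrow> real" where
  "Delta_op D S = (SUP M \<in> infdim_subspaces D. Gamma_op M S)"

definition tau_op :: "'a::real_normed_vector set \<Rightarrow> ('a \<Rightarrow> 'b::real_normed_vector) \<Rightarrow> real" where
  "tau_op D S = (SUP M \<in> infdim_subspaces D. (INF m \<in> unit_sphere_of M. norm (S m)))"

definition nabla_op :: "'a::real_normed_vector set \<Rightarrow> ('a \<Rightarrow> 'b::real_normed_vector) \<Rightarrow> real" where
  "nabla_op D S = (INF M \<in> infdim_subspaces D. tau_op M S)"

end

theory Submission
  imports Defs
begin


lemma sep_functional: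
  fixes W :: "'a::real_vector set"
  assumes "subspace W" "z \<notin> W"
  shows "\<exists>h. linear h \<and> (\<forall>w\<in>W. h w = 0) \<and> h z = (1::real)"
proof -
  obtain B where B: "B \<subseteq> W" "independent B" "W \<subseteq> span B"
    using maximal_independent_subset by blast
  have "span B \<subseteq> W" using span_minimal[OF B(1) assms(1)] .
  then have sB: "span B = W" using B(3) by (rule subset_antisym)
  have zB: "z \<notin> span B" using sB assms by simp
  have zB': "z \<notin> B" using zB span_base by blast
  have ind: "independent (insert z B)" using independent_insertI[OF zB B(2)] .
  obtain h :: "'a \<Rightarrow> real" where h: "linear h" "\<forall>x\<in>insert z B. h x = (if x = z then 1 else 0)"
    using linear_independent_extend[OF ind, of "\<lambda>x. if x = z then 1 else 0"] by blast
  have hB: "h b = 0" if "b \<in> B" for b using h(2) that zB' by force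
  have "h w = 0" if "w \<in> span B" for w
    using that
  proof (induction rule: span_induct)
    case base show ?case unfolding subspace_def using h(1)
      by (simp add: linear_add linear_scale linear_0)
  next
    case (step x) then show ?case using hB by simp
  qed
  then show ?thesis using h sB by auto
qed

lemma hb_step:
  fixes W :: "'a::real_normed_vector set" and f :: "'a \<Rightarrow> real"
  assumes W: "subspace W" and z: "z \<notin> W" and f: "linear f"
    and bd: "\<forall>w\<in>W. \<bar>f w\<bar> \<le> C * norm w" and C0: "C \<ge> 0"
  shows "\<exists>g. linear g \<and> (\<forall>w\<in>W. g w = f w) \<and> (\<forall>v\<in>span (insert z W). \<bar>g v\<bar> \<le> C * norm v)"
proof -
  obtain h :: "'a \<Rightarrow> real" where h: "linear h" "\<forall>w\<in>W. h w = 0" "h z = 1"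
    using sep_functional[OF W z] by blast
  define S where "S = (\<lambda>w. f w - C * norm (w - z)) ` W"
  define c where "c = Sup S"
  have key: "f w1 - C * norm (w1 - z) \<le> C * norm (w2 + z) - f w2" if "w1 \<in> W" "w2 \<in> W" for w1 w2
  proof -
    have "f w1 + f w2 = f (w1 + w2)" using f by (simp add: linear_add)
    also have "\<dots> \<le> C * norm (w1 + w2)" using bd W that subspace_add[of W w1 w2] abs_le_D1 by blast
    also have "\<dots> \<le> C * (norm (w1 - z) + norm (w2 + z))"
    proof -
      note C0
      moreover have "norm (w1 + w2) \<le> norm (w1 - z) + norm (w2 + z)"
        using norm_triangle_ineq[of "w1 - z" "w2 + z"] by simp
      ultimately show ?thesis by (simp add: mult_left_mono)
    qed
    finally show ?thesis by (simp add: algebra_simps)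
  qed
  have Sne: "S \<noteq> {}" using W S_def subspace_0 by blast
  have Sbd: "bdd_above S" unfolding S_def
    using key W subspace_0 by (intro bdd_aboveI2[where M="C * norm (0 + z) - f 0"]) blast
  have c1: "f w - C * norm (w - z) \<le> c" if "w \<in> W" for w
    unfolding c_def using Sbd that S_def by (intro cSup_upper) auto
  have c2: "c \<le> C * norm (w + z) - f w" if "w \<in> W" for w
    unfolding c_def using Sne that S_def key by (intro cSup_least) auto
  define g where "g v = f v + (c - f z) * h v" for v
  have gl: "linear g" unfolding g_def using f h(1)
    by (intro linearI) (auto simp: linear_add linear_scale algebra_simps)
  have gW: "\<forall>w\<in>W. g w = f w" using h unfolding g_def by simp
  have gdec: "g (w + t *\<^sub>R z) = f w + t * c" if "w \<in> W" for w t
    using that h f unfolding g_def by (simp add: linear_add linear_scale algebra_simps)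
  have up: "g v \<le> C * norm v" if vin: "v \<in> span (insert z W)" for v
  proof -
    obtain t where t0: "v - t *\<^sub>R z \<in> span W" using vin span_insert[of z W] by auto
    have t: "v - t *\<^sub>R z \<in> W" using t0 W by (metis span_eq_iff)
    define w where "w = v - t *\<^sub>R z"
    have v: "v = w + t *\<^sub>R z" "w \<in> W" using t w_def by auto
    have "f w + t * c \<le> C * norm (w + t *\<^sub>R z)"
    proof (cases "t = 0")
      case True then show ?thesis using bd v by auto
    next
      case False
      show ?thesis
      proof (cases "t > 0")
        case True
        have ww: "(1/t) *\<^sub>R w \<in> W" using v W by (simp add: subspace_scale)
        have "c \<le> C * norm ((1/t) *\<^sub>R w + z) - f ((1/t) *\<^sub>R w)" using c2[OF ww] .
        hence "t * c \<le> t * (C * norm ((1/t) *\<^sub>R w + z) - f ((1/t) *\<^sub>R w))"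
          using True by (simp add: mult_left_mono)
        also have "\<dots> = C * norm (w + t *\<^sub>R z) - f w"
        proof -
          have "norm ((1/t) *\<^sub>R w + z) = norm ((1/t) *\<^sub>R (w + t *\<^sub>R z))"
            using True by (simp add: scaleR_add_right)
          also have "\<dots> = (1/t) * norm (w + t *\<^sub>R z)" using True by simp
          finally show ?thesis using True f by (simp add: linear_scale algebra_simps)
        qed
        finally show ?thesis by simp
      next
        case False
        hence tn: "t < 0" using \<open>t \<noteq> 0\<close> by simp
        define s where "s = - t"
        have s: "s > 0" using tn s_def by simp
        have ww: "(1/s) *\<^sub>R w \<in> W" using v W by (simp add: subspace_scale)
        have "f ((1/s) *\<^sub>R w) - C * norm ((1/s) *\<^sub>R w - z) \<le> c" using c1[OF ww] .
        hence "s * (f ((1/s) *\<^sub>R w) - C * norm ((1/s) *\<^sub>R w - z)) \<le> s * c"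
          using s by (simp add: mult_left_mono)
        moreover have "s * (f ((1/s) *\<^sub>R w) - C * norm ((1/s) *\<^sub>R w - z)) = f w - C * norm (w + t *\<^sub>R z)"
        proof -
          have teq: "t = - s" using s_def by simp
          have e: "(1/s) *\<^sub>R (w + t *\<^sub>R z) = (1/s) *\<^sub>R w - z"
            using s teq by (simp add: scaleR_add_right scaleR_diff_right scaleR_scaleR)
          have "norm ((1/s) *\<^sub>R w - z) = norm ((1/s) *\<^sub>R (w + t *\<^sub>R z))"
            using e by simp
          also have "\<dots> = (1/s) * norm (w + t *\<^sub>R z)" using s by simp
          finally show ?thesis using s f by (simp add: linear_scale algebra_simps)
        qed
        ultimately show ?thesis using s_def by (simp add: algebra_simps)
      qed
    qed
    then show ?thesis using gdec v by simp
  qed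
  have "\<bar>g v\<bar> \<le> C * norm v" if "v \<in> span (insert z W)" for v
  proof -
    have "-v \<in> span (insert z W)" using that by (simp add: span_neg)
    then have "g (-v) \<le> C * norm v" using up by fastforce
    then have "- g v \<le> C * norm v" using gl by (simp add: linear_neg)
    then show ?thesis using up[OF that] by linarith
  qed
  then show ?thesis using gl gW by blast
qed



definition inv_st :: "'a::real_normed_vector set \<Rightarrow> nat \<Rightarrow> (nat \<Rightarrow> 'a) \<Rightarrow> (nat \<Rightarrow> 'a \<Rightarrow> real) \<Rightarrow> (nat \<Rightarrow> real) \<Rightarrow> bool" where
  "inv_st M n x \<phi> C \<longleftrightarrow> (\<forall>k<n. x k \<in> M) \<and> (\<forall>k<n. linear (\<phi> k))
     \<and> (\<forall>k<n. \<forall>j<n. \<phi> k (x j) = (if k = j then 1 else 0))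
     \<and> (\<forall>k<n. C k \<ge> 0 \<and> (\<forall>v\<in>span (x ` {..<n}). \<bar>\<phi> k v\<bar> \<le> C k * norm v))"

lemma biorth_repr:
  fixes x :: "nat \<Rightarrow> 'a::real_vector"
  assumes lin: "\<forall>k<n. linear (\<psi> k)"
    and bi: "\<forall>k<n. \<forall>j<n. \<psi> k (x j) = (if k = j then 1 else 0)"
    and g: "g \<in> span (x ` {..<n})"
  shows "g = (\<Sum>k<n. \<psi> k g *\<^sub>R x k)"
  using g
proof (induction rule: span_induct)
  case base
  show ?case unfolding subspace_def
  proof (intro conjI ballI allI)
    show "0 \<in> {g. g = (\<Sum>k<n. \<psi> k g *\<^sub>R x k)}" using lin by (simp add: linear_0)
  next
    fix a b assume a: "a \<in> {g. g = (\<Sum>k<n. \<psi> k g *\<^sub>R x k)}" and b: "b \<in> {g. g = (\<Sum>k<n. \<psi> k g *\<^sub>R x k)}"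
    have "(\<Sum>k<n. \<psi> k (a + b) *\<^sub>R x k) = (\<Sum>k<n. \<psi> k a *\<^sub>R x k) + (\<Sum>k<n. \<psi> k b *\<^sub>R x k)"
      using lin by (simp add: linear_add scaleR_add_left sum.distrib)
    then show "a + b \<in> {g. g = (\<Sum>k<n. \<psi> k g *\<^sub>R x k)}" using a b by simp
  next
    fix c a assume a: "a \<in> {g. g = (\<Sum>k<n. \<psi> k g *\<^sub>R x k)}"
    have "(\<Sum>k<n. \<psi> k (c *\<^sub>R a) *\<^sub>R x k) = c *\<^sub>R (\<Sum>k<n. \<psi> k a *\<^sub>R x k)"
      using lin by (simp add: linear_scale scaleR_sum_right)
    then show "c *\<^sub>R a \<in> {g. g = (\<Sum>k<n. \<psi> k g *\<^sub>R x k)}" using a by simp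
  qed
next
  case (step y)
  then obtain j where j: "j < n" "y = x j" by auto
  have "(\<Sum>k<n. \<psi> k y *\<^sub>R x k) = (\<Sum>k<n. (if k = j then x k else 0))"
    using bi j by (intro sum.cong) auto
  also have "\<dots> = x j" using j by (simp add: sum.delta)
  finally show ?case using j by simp
qed

lemma infdim_not_span:
  assumes "\<not> (\<exists>B. finite B \<and> span B = M)" "subspace M" "F \<subseteq> M" "finite F"
  obtains z where "z \<in> M" "z \<notin> span F"
proof -
  have "span F \<subseteq> M" using assms by (simp add: span_minimal)
  moreover have "span F \<noteq> M" using assms by blast
  ultimately show ?thesis using that by blast
qed

lemma biorth_step:
  fixes M :: "'a::real_normed_vector set"
  assumes M: "subspace M" "\<not> (\<exists>B. finite B \<and> span B = M)"
    and I: "inv_st M n x \<phi> C"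
  shows "\<exists>x' \<phi>' C'. (\<forall>k<n. x' k = x k \<and> C' k = C k) \<and> inv_st M (Suc n) x' \<phi>' C'"
proof -
  have Ix: "\<And>k. k<n \<Longrightarrow> x k \<in> M" and Il: "\<And>k. k<n \<Longrightarrow> linear (\<phi> k)"
    and Ib: "\<And>k j. k<n \<Longrightarrow> j<n \<Longrightarrow> \<phi> k (x j) = (if k = j then 1 else 0)"
    and Ic0: "\<And>k. k<n \<Longrightarrow> C k \<ge> 0"
    and Ic: "\<And>k v. k<n \<Longrightarrow> v\<in>span (x ` {..<n}) \<Longrightarrow> \<bar>\<phi> k v\<bar> \<le> C k * norm v"
    using I unfolding inv_st_def by blast+
  define G where "G = span (x ` {..<n})"
  have GM: "G \<subseteq> M" unfolding G_def using Ix M by (intro span_minimal) auto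
  obtain z where z: "z \<in> M" "z \<notin> G"
    using infdim_not_span[OF M(2,1), of "x ` {..<n}"] Ix G_def by blast
  have sG: "subspace G" unfolding G_def by simp
  have "\<forall>k. \<exists>g. k < n \<longrightarrow> (linear g \<and> (\<forall>w\<in>G. g w = \<phi> k w) \<and> (\<forall>v\<in>span (insert z G). \<bar>g v\<bar> \<le> C k * norm v))"
  proof
    fix k show "\<exists>g. k < n \<longrightarrow> (linear g \<and> (\<forall>w\<in>G. g w = \<phi> k w) \<and> (\<forall>v\<in>span (insert z G). \<bar>g v\<bar> \<le> C k * norm v))"
    proof (cases "k < n")
      case True
      then show ?thesis using hb_step[OF sG z(2) Il[OF True], of "C k"] Ic[OF True] Ic0[OF True] G_def by blast
    qed auto
  qed
  from choice[OF this] obtain \<psi> where \<psi>0: "\<forall>k. k < n \<longrightarrow> (linear (\<psi> k) \<and> (\<forall>w\<in>G. \<psi> k w = \<phi> k w) \<and> (\<forall>v\<in>span (insert z G). \<bar>\<psi> k v\<bar> \<le> C k * norm v))"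
    by blast
  have \<psi>: "\<And>k. k < n \<Longrightarrow> linear (\<psi> k) \<and> (\<forall>w\<in>G. \<psi> k w = \<phi> k w) \<and> (\<forall>v\<in>span (insert z G). \<bar>\<psi> k v\<bar> \<le> C k * norm v)"
    using \<psi>0 by blast
  have xG: "x j \<in> G" if "j < n" for j unfolding G_def using that by (simp add: span_base)
  have \<psi>bi: "\<psi> k (x j) = (if k = j then 1 else 0)" if "k < n" "j < n" for k j
    using \<psi>[OF that(1)] xG[OF that(2)] Ib[OF that] by simp
  define y where "y = z - (\<Sum>k<n. \<psi> k z *\<^sub>R x k)"
  have sumG: "(\<Sum>k<n. \<psi> k z *\<^sub>R x k) \<in> G" using xG sG
    by (intro subspace_sum[OF sG]) (auto intro: subspace_scale)
  have yM: "y \<in> M" using subspace_diff[OF M(1) z(1), of "\<Sum>k<n. \<psi> k z *\<^sub>R x k"] sumG GM unfolding y_def by blast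
  have yG: "y \<notin> G"
  proof
    assume "y \<in> G"
    then have "y + (\<Sum>k<n. \<psi> k z *\<^sub>R x k) \<in> G" using sumG sG subspace_add by blast
    then show False using z(2) y_def by simp
  qed
  have \<psi>y: "\<psi> k y = 0" if "k < n" for k
  proof -
    have "\<psi> k y = \<psi> k z - (\<Sum>j<n. \<psi> j z * \<psi> k (x j))"
      using \<psi>[OF that] unfolding y_def by (simp add: linear_diff linear_sum linear_scale)
    also have "(\<Sum>j<n. \<psi> j z * \<psi> k (x j)) = (\<Sum>j<n. if j = k then \<psi> k z else 0)"
      using \<psi>bi[OF that] by (intro sum.cong) auto
    also have "\<dots> = \<psi> k z" using that by (simp add: sum.delta)
    finally show ?thesis by simp
  qed
  obtain h :: "'a \<Rightarrow> real" where h: "linear h" "\<forall>w\<in>G. h w = 0" "h y = 1"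
    using sep_functional[OF sG yG] by blast
  define x' where "x' = x(n := y)"
  define \<phi>' where "\<phi>' = \<psi>(n := h)"
  define D where "D = (1 + (\<Sum>k<n. C k * norm (x k))) / norm y"
  define C' where "C' = C(n := D)"
  have img: "x' ` {..<Suc n} = insert y (x ` {..<n})" unfolding x'_def lessThan_Suc by auto
  have ynz: "y \<noteq> 0" using yG sG subspace_0 by blast
  have C0: "\<forall>k<n. C k \<ge> 0" using Ic0 by blast
  have D0: "D \<ge> 0" unfolding D_def using C0 ynz by (intro divide_nonneg_pos add_nonneg_nonneg sum_nonneg) auto
  have yspan: "y \<in> span (insert z G)"
  proof -
    have "z \<in> span (insert z G)" by (simp add: span_base)
    moreover have "(\<Sum>k<n. \<psi> k z *\<^sub>R x k) \<in> span (insert z G)" using sumG by (simp add: span_base)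
    ultimately show ?thesis unfolding y_def by (rule span_diff)
  qed
  have sub: "span (x' ` {..<Suc n}) \<subseteq> span (insert z G)"
    unfolding img using yspan xG
    by (intro span_minimal) (auto intro: span_base)
  have bdn: "\<bar>h v\<bar> \<le> D * norm v" if v: "v \<in> span (x' ` {..<Suc n})" for v
  proof -
    obtain t where t0: "v - t *\<^sub>R y \<in> span (x ` {..<n})" using v span_insert[of y "x ` {..<n}"] img by auto
    define g where "g = v - t *\<^sub>R y"
    have gG: "g \<in> G" using t0 g_def G_def by simp
    have "h (v - t *\<^sub>R y) = 0" using h(2) gG unfolding g_def by blast
    then have hv: "h v = t" using h(1,3) by (simp add: linear_diff linear_scale)
    have \<psi>g: "\<psi> k g = \<psi> k v" if "k < n" for k
      using \<psi>[OF that] \<psi>y[OF that] unfolding g_def by (simp add: linear_diff linear_scale)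
    have vs: "v \<in> span (insert z G)" using v sub by blast
    have grepr: "g = (\<Sum>k<n. \<psi> k g *\<^sub>R x k)"
      using biorth_repr[of n \<psi> x g] \<psi> \<psi>bi gG G_def by auto
    have "norm g = norm (\<Sum>k<n. \<psi> k g *\<^sub>R x k)" using arg_cong[where f=norm, OF grepr] .
    also have "\<dots> \<le> (\<Sum>k<n. norm (\<psi> k g *\<^sub>R x k))"
      by (rule norm_sum)
    also have "\<dots> \<le> (\<Sum>k<n. C k * norm v * norm (x k))"
    proof (rule sum_mono)
      fix k assume "k \<in> {..<n}"
      then have k: "k < n" by simp
      have "\<bar>\<psi> k v\<bar> \<le> C k * norm v" using \<psi>[OF k] vs by blast
      then have "\<bar>\<psi> k v\<bar> * norm (x k) \<le> C k * norm v * norm (x k)" by (rule mult_right_mono) simp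
      then show "norm (\<psi> k g *\<^sub>R x k) \<le> C k * norm v * norm (x k)" using \<psi>g[OF k] by simp
    qed
    also have "\<dots> = norm v * (\<Sum>k<n. C k * norm (x k))"
      by (simp add: sum_distrib_left algebra_simps)
    finally have ng: "norm g \<le> norm v * (\<Sum>k<n. C k * norm (x k))" .
    have "\<bar>t\<bar> * norm y = norm (v - g)" unfolding g_def by simp
    also have "\<dots> \<le> norm v + norm g" by (rule norm_triangle_ineq4)
    also have "\<dots> \<le> (1 + (\<Sum>k<n. C k * norm (x k))) * norm v"
    proof -
      have "(1 + (\<Sum>k<n. C k * norm (x k))) * norm v = norm v + norm v * (\<Sum>k<n. C k * norm (x k))"
        by (simp add: algebra_simps)
      then show ?thesis using ng by linarith
    qed
    finally have "\<bar>t\<bar> * norm y \<le> (1 + (\<Sum>k<n. C k * norm (x k))) * norm v" .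
    then have "\<bar>t\<bar> \<le> (1 + (\<Sum>k<n. C k * norm (x k))) * norm v / norm y"
      using ynz by (subst pos_le_divide_eq) auto
    also have "\<dots> = D * norm v" unfolding D_def by simp
    finally show ?thesis using hv by simp
  qed
  have "inv_st M (Suc n) x' \<phi>' C'"
    unfolding inv_st_def
  proof (intro conjI allI impI ballI)
    fix k assume k: "k < Suc n"
    show "x' k \<in> M" using k Ix yM unfolding x'_def by (auto simp: less_Suc_eq)
    show "linear (\<phi>' k)" using k \<psi> h unfolding \<phi>'_def by (auto simp: less_Suc_eq)
    show "C' k \<ge> 0" using k C0 D0 unfolding C'_def by (auto simp: less_Suc_eq)
  next
    fix k j assume k: "k < Suc n" and j: "j < Suc n"
    show "\<phi>' k (x' j) = (if k = j then 1 else 0)"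
    proof -
      have "k < n \<or> k = n" "j < n \<or> j = n" using k j by auto
      then show ?thesis using \<psi>bi \<psi>y h(2,3) xG unfolding \<phi>'_def x'_def by auto
    qed
  next
    fix k v assume k: "k < Suc n" and v: "v \<in> span (x' ` {..<Suc n})"
    show "\<bar>\<phi>' k v\<bar> \<le> C' k * norm v"
    proof (cases "k = n")
      case True then show ?thesis using bdn[OF v] unfolding \<phi>'_def C'_def by simp
    next
      case False
      then have "k < n" using k by simp
      then show ?thesis using \<psi> v sub False unfolding \<phi>'_def C'_def by auto
    qed
  qed
  moreover have "\<forall>k<n. x' k = x k \<and> C' k = C k" unfolding x'_def C'_def by auto
  ultimately show ?thesis by blast
qed



lemma inv_stD:
  assumes "inv_st M n x \<phi> C" "k < n"
  shows "x k \<in> M" "linear (\<phi> k)" "C k \<ge> 0" "\<And>j. j < n \<Longrightarrow> \<phi> k (x j) = (if k = j then 1 else 0)"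
    "\<And>v. v \<in> span (x ` {..<n}) \<Longrightarrow> \<bar>\<phi> k v\<bar> \<le> C k * norm v"
proof -
  have A: "\<forall>k<n. x k \<in> M" "\<forall>k<n. linear (\<phi> k)" "\<forall>k<n. \<forall>j<n. \<phi> k (x j) = (if k = j then 1 else 0)"
    "\<forall>k<n. C k \<ge> 0 \<and> (\<forall>v\<in>span (x ` {..<n}). \<bar>\<phi> k v\<bar> \<le> C k * norm v)"
    using assms(1) unfolding inv_st_def by blast+
  show "x k \<in> M" using A(1) assms(2) by simp
  show "linear (\<phi> k)" using A(2) assms(2) by simp
  show "C k \<ge> 0" using A(4) assms(2) by simp
  show "\<phi> k (x j) = (if k = j then 1 else 0)" if "j < n" for j using A(3) assms(2) that by simp
  show "\<bar>\<phi> k v\<bar> \<le> C k * norm v" if "v \<in> span (x ` {..<n})" for v using A(4) assms(2) that by simp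
qed

lemma exists_seq:
  fixes M :: "'a::real_normed_vector set"
  assumes M: "subspace M" "\<not> (\<exists>B. finite B \<and> span B = M)"
  shows "\<exists>(x::nat \<Rightarrow> 'a) C. (\<forall>k. x k \<in> M) \<and> (\<forall>k. C k \<ge> 0) \<and>
     (\<forall>n a k. k < n \<longrightarrow> \<bar>a k\<bar> \<le> C k * norm (\<Sum>j<n. a j *\<^sub>R x j))"
proof -
  define P where "P n s s' \<longleftrightarrow> (\<forall>k<n. fst s' k = fst s k \<and> snd (snd s') k = snd (snd s) k)
      \<and> inv_st M (Suc n) (fst s') (fst (snd s')) (snd (snd s'))"
    for n and s s' :: "(nat \<Rightarrow> 'a) \<times> (nat \<Rightarrow> 'a \<Rightarrow> real) \<times> (nat \<Rightarrow> real)"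
  define st where "st = rec_nat ((\<lambda>_. 0), (\<lambda>_ _. 0), (\<lambda>_. 0)) (\<lambda>n s. SOME s'. P n s s')"
  have st0: "st 0 = ((\<lambda>_. 0), (\<lambda>_ _. 0), (\<lambda>_. 0))" unfolding st_def by simp
  have stS: "st (Suc n) = (SOME s'. P n (st n) s')" for n unfolding st_def by simp
  define X where "X n = fst (st n)" for n
  define \<Phi> where "\<Phi> n = fst (snd (st n))" for n
  define D where "D n = snd (snd (st n))" for n
  have inv: "inv_st M n (X n) (\<Phi> n) (D n)" for n
  proof (induction n)
    case 0 show ?case unfolding inv_st_def by simp
  next
    case (Suc n)
    obtain x' \<phi>' C' where "(\<forall>k<n. x' k = X n k \<and> C' k = D n k) \<and> inv_st M (Suc n) x' \<phi>' C'"
      using biorth_step[OF M Suc] by blast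
    then have "P n (st n) (x', \<phi>', C')" unfolding P_def X_def D_def by simp
    then have "P n (st n) (st (Suc n))" unfolding stS by (rule someI)
    then show ?case unfolding P_def X_def \<Phi>_def D_def by simp
  qed
  have agree1: "X (Suc n) k = X n k \<and> D (Suc n) k = D n k" if "k < n" for n k
  proof -
    obtain x' \<phi>' C' where "(\<forall>k<n. x' k = X n k \<and> C' k = D n k) \<and> inv_st M (Suc n) x' \<phi>' C'"
      using biorth_step[OF M inv[of n]] by blast
    then have "P n (st n) (x', \<phi>', C')" unfolding P_def X_def D_def by simp
    then have "P n (st n) (st (Suc n))" unfolding stS by (rule someI)
    then show ?thesis using that unfolding P_def X_def D_def by simp
  qed
  have agree: "X m k = X (Suc k) k \<and> D m k = D (Suc k) k" if "Suc k \<le> m" for m k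
    using that
  proof (induction m rule: dec_induct)
    case base then show ?case by simp
  next
    case (step m) then show ?case using agree1[of k m] by simp
  qed
  define x where "x k = X (Suc k) k" for k
  define C where "C k = D (Suc k) k" for k
  have xM: "x k \<in> M" for k unfolding x_def by (rule inv_stD(1)[OF inv]) simp
  have C0: "C k \<ge> 0" for k unfolding C_def by (rule inv_stD(3)[OF inv]) simp
  have bd: "\<bar>a k\<bar> \<le> C k * norm (\<Sum>j<n. a j *\<^sub>R x j)" if k: "k < n" for n a k
  proof -
    have I: "inv_st M n (X n) (\<Phi> n) (D n)" by (rule inv)
    have Xx: "X n j = x j" if "j < n" for j using agree[of j n] that unfolding x_def by simp
    have DC: "D n k = C k" using agree[of k n] k unfolding C_def by simp
    have sumeq: "(\<Sum>j<n. a j *\<^sub>R x j) = (\<Sum>j<n. a j *\<^sub>R X n j)" using Xx by simp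
    note lin = inv_stD(2)[OF I k]
    note Ib = inv_stD(4)[OF I k]
    note Ic = inv_stD(5)[OF I k]
    have "\<Phi> n k (\<Sum>j<n. a j *\<^sub>R X n j) = (\<Sum>j<n. a j * \<Phi> n k (X n j))"
      using lin by (simp add: linear_sum linear_scale)
    also have "\<dots> = (\<Sum>j<n. if j = k then a k else 0)"
      using Ib by (intro sum.cong) auto
    also have "\<dots> = a k" using k by (simp add: sum.delta)
    finally have e: "\<Phi> n k (\<Sum>j<n. a j *\<^sub>R X n j) = a k" .
    have "(\<Sum>j<n. a j *\<^sub>R X n j) \<in> span (X n ` {..<n})"
      by (intro span_sum span_scale span_base) auto
    then have "\<bar>\<Phi> n k (\<Sum>j<n. a j *\<^sub>R X n j)\<bar> \<le> D n k * norm (\<Sum>j<n. a j *\<^sub>R X n j)"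
      by (rule Ic)
    then show ?thesis using e DC sumeq by simp
  qed
  have H: "(\<forall>k. x k \<in> M) \<and> (\<forall>k. C k \<ge> 0) \<and>
     (\<forall>n a k. k < n \<longrightarrow> \<bar>a k\<bar> \<le> C k * norm (\<Sum>j<n. a j *\<^sub>R x j))"
  proof (intro conjI allI impI)
    fix k show "x k \<in> M" by (rule xM)
  next
    fix k show "C k \<ge> 0" by (rule C0)
  next
    fix n a k assume "k < (n::nat)"
    then show "\<bar>a k\<bar> \<le> C k * norm (\<Sum>j<n. a j *\<^sub>R x j)" by (rule bd)
  qed
  show ?thesis
    by (rule exI[of _ x], rule exI[of _ C], rule H)
qed



lemma span_range_repr:
  fixes x :: "nat \<Rightarrow> 'a::real_vector"
  assumes "m \<in> span (range x)"
  shows "\<exists>n a. m = (\<Sum>j<n. a j *\<^sub>R x j)"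
  using assms
proof (induction rule: span_induct)
  case base
  show ?case unfolding subspace_def
  proof (intro conjI ballI allI)
    show "0 \<in> {m. \<exists>n a. m = (\<Sum>j<n. a j *\<^sub>R x j)}"
      by (auto intro!: exI[of _ 0])
  next
    fix u v assume u: "u \<in> {m. \<exists>n a. m = (\<Sum>j<n. a j *\<^sub>R x j)}" and v: "v \<in> {m. \<exists>n a. m = (\<Sum>j<n. a j *\<^sub>R x j)}"
    obtain n1 a1 where 1: "u = (\<Sum>j<n1. a1 j *\<^sub>R x j)" using u by blast
    obtain n2 a2 where 2: "v = (\<Sum>j<n2. a2 j *\<^sub>R x j)" using v by blast
    define N where "N = max n1 n2"
    have e: "(\<Sum>j<n. a j *\<^sub>R x j) = (\<Sum>j<N. (if j < n then a j else 0) *\<^sub>R x j)" if "n \<le> N" for n a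
    proof -
      have "(\<Sum>j<N. (if j < n then a j else 0) *\<^sub>R x j) = (\<Sum>j\<in>{..<N} \<inter> {j. j < n}. a j *\<^sub>R x j)"
        by (simp add: sum.inter_restrict if_distrib[of "\<lambda>r. r *\<^sub>R _"] cong: if_cong)
      also have "{..<N} \<inter> {j. j < n} = {..<n}" using that by auto
      finally show ?thesis by simp
    qed
    have "u + v = (\<Sum>j<N. ((if j < n1 then a1 j else 0) + (if j < n2 then a2 j else 0)) *\<^sub>R x j)"
      using e[of n1 a1] e[of n2 a2] 1 2 N_def by (simp add: scaleR_add_left sum.distrib)
    then have "\<exists>n a. u + v = (\<Sum>j<n. a j *\<^sub>R x j)" by (intro exI) assumption
    then show "u + v \<in> {m. \<exists>n a. m = (\<Sum>j<n. a j *\<^sub>R x j)}" by simp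
  next
    fix c u assume u: "u \<in> {m. \<exists>n a. m = (\<Sum>j<n. a j *\<^sub>R x j)}"
    obtain n1 a1 where 1: "u = (\<Sum>j<n1. a1 j *\<^sub>R x j)" using u by blast
    have "c *\<^sub>R u = (\<Sum>j<n1. (c * a1 j) *\<^sub>R x j)" using 1 by (simp add: scaleR_sum_right)
    then have "\<exists>n a. c *\<^sub>R u = (\<Sum>j<n. a j *\<^sub>R x j)" by (intro exI) assumption
    then show "c *\<^sub>R u \<in> {m. \<exists>n a. m = (\<Sum>j<n. a j *\<^sub>R x j)}" by simp
  qed
next
  case (step y)
  then obtain k where k: "y = x k" by auto
  have "y = (\<Sum>j<Suc k. (if j = k then 1 else 0) *\<^sub>R x j)"
    using k by (simp add: if_distrib[of "\<lambda>r. r *\<^sub>R _"] sum.delta cong: if_cong)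
  then show ?case by (intro CollectI exI) assumption
qed

lemma geom_half_sum: "(\<Sum>j<n. (1/2::real) ^ Suc j) \<le> 1"
proof -
  have "(\<Sum>j<n. (1/2::real) ^ Suc j) = 1 - (1/2) ^ n"
    by (induction n) (simp_all add: field_simps)
  then show ?thesis by simp
qed

lemma transfer_map:
  fixes M E :: "'a::real_normed_vector set"
  assumes M: "subspace M" "\<not> (\<exists>B. finite B \<and> span B = M)"
    and dense: "\<And>y e. e > 0 \<Longrightarrow> \<exists>z\<in>E. norm (z - y) < e"
    and E: "subspace E"
    and dpos: "\<delta> > 0"
  shows "\<exists>M' J. subspace M' \<and> M' \<subseteq> M \<and> \<not> (\<exists>B. finite B \<and> span B = M') \<and> linear J \<and>
     J ` M' \<subseteq> E \<and> (\<forall>m\<in>M'. norm (J m - m) \<le> \<delta> * norm m)"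
proof -
  obtain x :: "nat \<Rightarrow> 'a" and C where xM: "\<And>k. x k \<in> M" and C0: "\<And>k. C k \<ge> 0"
    and bd: "\<And>n a k. k < n \<Longrightarrow> \<bar>a k\<bar> \<le> C k * norm (\<Sum>j<n. a j *\<^sub>R x j)"
    using exists_seq[OF M] by blast
  have zero_coef: "a k = 0" if "(\<Sum>j<n. a j *\<^sub>R x j) = 0" "k < n" for n a k
    using bd[OF that(2), of a] that(1) by simp
  have injx: "inj x"
  proof (rule injI)
    fix i j assume eq: "x i = x j"
    show "i = j"
    proof (rule ccontr)
      assume ne: "i \<noteq> j"
      define n where "n = Suc (max i j)"
      define a where "a l = (if l = i then 1 else if l = j then -1 else (0::real))" for l
      have "(\<Sum>l<n. a l *\<^sub>R x l) = (\<Sum>l<n. (if l = i then x i else 0) + (if l = j then - x j else 0))"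
        unfolding a_def using ne by (intro sum.cong) auto
      also have "\<dots> = x i - x j" unfolding sum.distrib n_def by (simp add: sum.delta)
      finally have "(\<Sum>l<n. a l *\<^sub>R x l) = 0" using eq by simp
      moreover have "i < n" unfolding n_def by simp
      ultimately have "a i = 0" by (rule zero_coef)
      then show False unfolding a_def by simp
    qed
  qed
  have indep: "independent (range x)"
  proof
    assume "dependent (range x)"
    then obtain T u where T: "finite T" "T \<subseteq> range x" "(\<Sum>v\<in>T. u v *\<^sub>R v) = 0" "\<exists>v\<in>T. u v \<noteq> 0"
      unfolding dependent_explicit by blast
    obtain I where I: "finite I" "T = x ` I" using T(1,2) by (meson finite_subset_image)
    define n where "n = Suc (Max (insert 0 I))"
    have In: "I \<subseteq> {..<n}" using I(1) unfolding n_def by (auto simp: le_imp_less_Suc)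
    define a where "a j = (if j \<in> I then u (x j) else 0)" for j
    have "(\<Sum>j<n. a j *\<^sub>R x j) = (\<Sum>j\<in>I. u (x j) *\<^sub>R x j)"
    proof -
      have "(\<Sum>j<n. a j *\<^sub>R x j) = (\<Sum>j\<in>{..<n} \<inter> I. u (x j) *\<^sub>R x j)"
        unfolding a_def by (simp add: sum.inter_restrict if_distrib[of "\<lambda>r. r *\<^sub>R _"] cong: if_cong)
      also have "{..<n} \<inter> I = I" using In by auto
      finally show ?thesis .
    qed
    also have "\<dots> = (\<Sum>v\<in>T. u v *\<^sub>R v)" unfolding I(2)
      using injx by (subst sum.reindex) (auto intro: inj_on_subset)
    finally have "(\<Sum>j<n. a j *\<^sub>R x j) = 0" using T(3) by simp
    moreover obtain v where "v \<in> T" "u v \<noteq> 0" using T(4) by blast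
    then obtain i where i: "i \<in> I" "v = x i" "u (x i) \<noteq> 0" using I(2) by blast
    ultimately show False using zero_coef[of a n i] In i unfolding a_def by auto
  qed
  define M' where "M' = span (range x)"
  have M'sub: "subspace M'" unfolding M'_def by simp
  have M'M: "M' \<subseteq> M" unfolding M'_def using xM M(1) by (intro span_minimal) auto
  have M'inf: "\<not> (\<exists>B. finite B \<and> span B = M')"
  proof
    assume "\<exists>B. finite B \<and> span B = M'"
    then obtain B where B: "finite B" "span B = M'" by blast
    have "range x \<subseteq> span B" using B(2) unfolding M'_def by (simp add: span_superset)
    then have "finite (range x)" using independent_span_bound[OF B(1) indep] by blast
    then have "finite (UNIV::nat set)" using finite_imageD[of x UNIV] injx by blast
    then show False by simp
  qed
  define \<eta> where "\<eta> k = \<delta> / (2 ^ Suc k * (C k + 1))" for k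
  have \<eta>pos: "\<eta> k > 0" for k unfolding \<eta>_def using dpos C0[of k] by (intro divide_pos_pos mult_pos_pos) auto
  have "\<forall>k. \<exists>z. z \<in> E \<and> norm (z - x k) < \<eta> k" using dense \<eta>pos by blast
  from choice[OF this] obtain e where e0: "\<forall>k. e k \<in> E \<and> norm (e k - x k) < \<eta> k" by blast
  have e: "\<And>k. e k \<in> E" "\<And>k. norm (e k - x k) < \<eta> k" using e0 by blast+
  obtain J where J: "linear J" "\<forall>v\<in>range x. J v = e (inv x v)"
    using linear_independent_extend[OF indep, of "\<lambda>v. e (inv x v)"] by blast
  have Jx: "J (x k) = e k" for k using J(2) injx by simp
  have JE: "J ` M' \<subseteq> E"
  proof -
    have "J ` M' = span (J ` range x)" unfolding M'_def using linear_span_image[OF J(1)] by simp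
    also have "J ` range x = range e" using Jx by (auto simp: image_iff)
    also have "span (range e) \<subseteq> E" using e(1) E by (intro span_minimal) auto
    finally show ?thesis .
  qed
  have Jb: "norm (J m - m) \<le> \<delta> * norm m" if m: "m \<in> M'" for m
  proof -
    obtain n a where mr: "m = (\<Sum>j<n. a j *\<^sub>R x j)" using span_range_repr m M'_def by blast
    have "J m - m = (\<Sum>j<n. a j *\<^sub>R (e j - x j))"
      unfolding mr using J(1) Jx by (simp add: linear_sum linear_scale scaleR_diff_right sum_subtractf)
    then have "norm (J m - m) \<le> (\<Sum>j<n. norm (a j *\<^sub>R (e j - x j)))" using norm_sum by metis
    also have "\<dots> \<le> (\<Sum>j<n. \<delta> * norm m * (1/2) ^ Suc j)"
    proof (rule sum_mono)
      fix j assume "j \<in> {..<n}"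
      then have j: "j < n" by simp
      have aj: "\<bar>a j\<bar> \<le> C j * norm m" using bd[OF j, of a] mr by simp
      have "norm (a j *\<^sub>R (e j - x j)) = \<bar>a j\<bar> * norm (e j - x j)" by simp
      also have "\<dots> \<le> (C j * norm m) * \<eta> j"
        using aj e(2)[of j] by (intro mult_mono) auto
      also have "\<dots> = norm m * (\<delta> * (C j / (C j + 1))) * (1/2) ^ Suc j"
        unfolding \<eta>_def using C0[of j] by (simp add: field_simps power_divide)
      also have "\<dots> \<le> norm m * \<delta> * (1/2) ^ Suc j"
      proof -
        have "C j / (C j + 1) \<le> 1" using C0[of j] by simp
        then have "\<delta> * (C j / (C j + 1)) \<le> \<delta>" using dpos mult_left_le[of "C j / (C j + 1)" \<delta>] by linarith
        then show ?thesis by (intro mult_right_mono mult_left_mono) auto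
      qed
      finally show "norm (a j *\<^sub>R (e j - x j)) \<le> \<delta> * norm m * (1/2) ^ Suc j" by (simp add: algebra_simps)
    qed
    also have "\<dots> = \<delta> * norm m * (\<Sum>j<n. (1/2::real) ^ Suc j)" by (simp add: sum_distrib_left)
    also have "\<dots> \<le> \<delta> * norm m * 1"
      using geom_half_sum[of n] dpos by (intro mult_left_mono) auto
    finally show ?thesis by simp
  qed
  show ?thesis using M'sub M'M M'inf J(1) JE Jb by blast
qed



lemma unit_sphere_ne:
  fixes M :: "'a::real_normed_vector set"
  assumes "subspace M" "\<not> (\<exists>B. finite B \<and> span B = M)"
  shows "unit_sphere_of M \<noteq> {}"
proof -
  have "M \<noteq> {0}"
  proof
    assume "M = {0}"
    then have "span {} = M" by simp
    then show False using assms(2) by blast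
  qed
  moreover have "0 \<in> M" using assms(1) subspace_0 by blast
  ultimately obtain m where m: "m \<in> M" "m \<noteq> 0" by blast
  have "(1 / norm m) *\<^sub>R m \<in> M" using m assms(1) by (simp add: subspace_scale)
  moreover have "norm ((1 / norm m) *\<^sub>R m) = 1" using m by simp
  ultimately show ?thesis unfolding unit_sphere_of_def by blast
qed

lemma sup_close:
  fixes T :: "'a::real_normed_vector \<Rightarrow> 'b::real_normed_vector"
  assumes lin: "linear T" and K: "\<And>x. norm (T x) \<le> K * norm x" and K0: "K \<ge> 0"
    and A: "A \<noteq> {}" and B1: "\<And>b. b \<in> B \<Longrightarrow> norm b = 1"
    and close: "\<And>a. a \<in> A \<Longrightarrow> \<exists>b\<in>B. norm (a - b) \<le> r"
  shows "(SUP a\<in>A. norm (T a)) \<le> (SUP b\<in>B. norm (T b)) + K * r"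
proof (rule cSUP_least[OF A])
  fix a assume a: "a \<in> A"
  obtain b where b: "b \<in> B" "norm (a - b) \<le> r" using close[OF a] by blast
  have bdd: "bdd_above ((\<lambda>b. norm (T b)) ` B)"
    using K B1 by (intro bdd_aboveI2[where M=K]) (metis mult.right_neutral)
  have "norm (T a) \<le> norm (T b) + norm (T a - T b)" by (rule norm_triangle_sub)
  also have "norm (T a - T b) = norm (T (a - b))" using lin by (simp add: linear_diff)
  also have "\<dots> \<le> K * norm (a - b)" by (rule K)
  also have "\<dots> \<le> K * r"
  proof -
    show ?thesis using K0 using b(2) by (simp add: mult_left_mono)
  qed
  also have "norm (T b) \<le> (SUP b\<in>B. norm (T b))" using bdd b(1) by (rule cSUP_upper2) simp
  finally show "norm (T a) \<le> (SUP b\<in>B. norm (T b)) + K * r" by simp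
qed

lemma inf_close:
  fixes T :: "'a::real_normed_vector \<Rightarrow> 'b::real_normed_vector"
  assumes lin: "linear T" and K: "\<And>x. norm (T x) \<le> K * norm x" and K0: "K \<ge> 0"
    and B: "B \<noteq> {}"
    and close: "\<And>b. b \<in> B \<Longrightarrow> \<exists>a\<in>A. norm (a - b) \<le> r"
  shows "(INF a\<in>A. norm (T a)) \<le> (INF b\<in>B. norm (T b)) + K * r"
proof -
  have bdd: "bdd_below ((\<lambda>a. norm (T a)) ` A)" by (intro bdd_belowI2[where m=0]) simp
  have "(INF a\<in>A. norm (T a)) - K * r \<le> (INF b\<in>B. norm (T b))"
  proof (rule cINF_greatest[OF B])
    fix b assume b: "b \<in> B"
    obtain a where a: "a \<in> A" "norm (a - b) \<le> r" using close[OF b] by blast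
    have "(INF a\<in>A. norm (T a)) \<le> norm (T a)" using bdd a(1) by (rule cINF_lower2) simp
    also have "norm (T a) \<le> norm (T b) + norm (T a - T b)" by (rule norm_triangle_sub)
    also have "norm (T a - T b) = norm (T (a - b))" using lin by (simp add: linear_diff)
    also have "\<dots> \<le> K * norm (a - b)" by (rule K)
    also have "\<dots> \<le> K * r" using a(2) K0 by (simp add: mult_left_mono)
    finally show "(INF a\<in>A. norm (T a)) - K * r \<le> norm (T b)" by simp
  qed
  then show ?thesis by simp
qed

lemma sphere_close:
  fixes J :: "'a::real_normed_vector \<Rightarrow> 'a"
  assumes J: "linear J" and Jb: "\<And>m. m \<in> M' \<Longrightarrow> norm (J m - m) \<le> \<delta> * norm m"
    and d: "0 < \<delta>" "\<delta> \<le> 1/2" and L: "subspace L'" "L' \<subseteq> M'"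
  shows "\<And>n. n \<in> unit_sphere_of (J ` L') \<Longrightarrow> \<exists>u\<in>unit_sphere_of L'. norm (n - u) \<le> 4 * \<delta>"
    and "\<And>u. u \<in> unit_sphere_of L' \<Longrightarrow> \<exists>n\<in>unit_sphere_of (J ` L'). norm (n - u) \<le> 4 * \<delta>"
proof -
  fix n assume "n \<in> unit_sphere_of (J ` L')"
  then obtain m where m: "m \<in> L'" "n = J m" "norm n = 1" unfolding unit_sphere_of_def by blast
  have jm: "norm (J m - m) \<le> \<delta> * norm m" using Jb m(1) L(2) by blast
  have "norm m \<le> norm (J m) + norm (J m - m)" using norm_triangle_sub[of m "J m"] by (simp add: norm_minus_commute)
  then have "norm m \<le> 1 + \<delta> * norm m" using jm m by simp
  then have "(1 - \<delta>) * norm m \<le> 1" by (simp add: algebra_simps)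
  moreover have "(1/2) * norm m \<le> (1 - \<delta>) * norm m" using d by (intro mult_right_mono) auto
  ultimately have m2: "norm m \<le> 2" by linarith
  have mnz: "m \<noteq> 0" using m J by (auto simp: linear_0)
  define u where "u = (1 / norm m) *\<^sub>R m"
  have uL: "u \<in> L'" unfolding u_def using m(1) L(1) by (simp add: subspace_scale)
  have u1: "norm u = 1" unfolding u_def using mnz by simp
  have e1: "(norm m - 1) * (1 / norm m) = 1 - 1 / norm m" using mnz by (simp add: field_simps)
  have "(norm m - 1) *\<^sub>R u = m - u" unfolding u_def scaleR_scaleR e1 by (simp add: scaleR_diff_left)
  then have "m - u = (norm m - 1) *\<^sub>R u" by simp
  then have mu: "norm (m - u) = \<bar>norm m - 1\<bar>" using u1 by simp
  have "\<bar>norm m - 1\<bar> = \<bar>norm m - norm (J m)\<bar>" using m by simp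
  also have "\<dots> \<le> norm (J m - m)" using norm_triangle_ineq3[of "J m" m] by (simp add: abs_minus_commute)
  finally have "norm (m - u) \<le> \<delta> * norm m" using mu jm by simp
  moreover have "norm (n - u) \<le> norm (n - m) + norm (m - u)" using norm_triangle_ineq[of "n - m" "m - u"] by simp
  ultimately have "norm (n - u) \<le> 2 * (\<delta> * norm m)" using jm m(2) by simp
  also have "\<dots> \<le> 2 * (\<delta> * 2)" using m2 d by (intro mult_left_mono) auto
  finally have "norm (n - u) \<le> 4 * \<delta>" by simp
  then show "\<exists>u\<in>unit_sphere_of L'. norm (n - u) \<le> 4 * \<delta>" using uL u1 unfolding unit_sphere_of_def by blast
next
  fix u assume "u \<in> unit_sphere_of L'"
  then have u: "u \<in> L'" "norm u = 1" unfolding unit_sphere_of_def by auto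
  have ju: "norm (J u - u) \<le> \<delta>" using Jb[of u] u L(2) by auto
  have "norm u \<le> norm (J u) + norm (J u - u)" using norm_triangle_sub[of u "J u"] by (simp add: norm_minus_commute)
  then have jn: "norm (J u) \<ge> 1 - \<delta>" using ju u by simp
  then have jpos: "norm (J u) > 0" using d by linarith
  define n where "n = (1 / norm (J u)) *\<^sub>R J u"
  have nL: "n \<in> J ` L'" unfolding n_def
  proof
    show "(1 / norm (J u)) *\<^sub>R J u = J ((1 / norm (J u)) *\<^sub>R u)" using J by (simp add: linear_scale)
    show "(1 / norm (J u)) *\<^sub>R u \<in> L'" using u L(1) by (simp add: subspace_scale)
  qed
  have n1: "norm n = 1" unfolding n_def using jpos by simp
  have e2: "(norm (J u) - 1) * (1 / norm (J u)) = 1 - 1 / norm (J u)" using jpos by (simp add: field_simps)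
  have "(norm (J u) - 1) *\<^sub>R n = J u - n" unfolding n_def scaleR_scaleR e2 by (simp add: scaleR_diff_left)
  then have "J u - n = (norm (J u) - 1) *\<^sub>R n" by simp
  then have "norm (J u - n) = \<bar>norm (J u) - 1\<bar>" using n1 by simp
  also have "\<dots> = \<bar>norm (J u) - norm u\<bar>" using u by simp
  also have "\<dots> \<le> norm (J u - u)" by (rule norm_triangle_ineq3)
  finally have "norm (J u - n) \<le> \<delta>" using ju by simp
  moreover have "norm (n - u) \<le> norm (n - J u) + norm (J u - u)" using norm_triangle_ineq[of "n - J u" "J u - u"] by simp
  ultimately have "norm (n - u) \<le> 2 * \<delta>" using ju by (simp add: norm_minus_commute)
  then have "norm (n - u) \<le> 4 * \<delta>" using d by simp
  then show "\<exists>n\<in>unit_sphere_of (J ` L'). norm (n - u) \<le> 4 * \<delta>" using nL n1 unfolding unit_sphere_of_def by blast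
qed

lemma infdim_image:
  fixes J :: "'a::real_vector \<Rightarrow> 'b::real_vector"
  assumes J: "linear J" and inj: "inj_on J M'" and L: "L' \<subseteq> M'" "subspace L'"
  shows "(\<exists>B. finite B \<and> span B = J ` L') \<longleftrightarrow> (\<exists>B. finite B \<and> span B = L')"
proof
  assume "\<exists>B. finite B \<and> span B = J ` L'"
  then obtain B where B: "finite B" "span B = J ` L'" by blast
  have "B \<subseteq> J ` L'" using B(2) span_superset by blast
  then obtain B' where B': "B' \<subseteq> L'" "finite B'" "B = J ` B'"
    using B(1) by (meson finite_subset_image)
  have "J ` span B' = J ` L'" using B(2) B'(3) linear_span_image[OF J] by simp
  moreover have "span B' \<subseteq> L'" using B'(1) L(2) by (simp add: span_minimal)
  ultimately have "span B' = L'" using inj L(1) inj_on_image_eq_iff[of J M' "span B'" L'] by blast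
  then show "\<exists>B. finite B \<and> span B = L'" using B'(2) by blast
next
  assume "\<exists>B. finite B \<and> span B = L'"
  then obtain B where B: "finite B" "span B = L'" by blast
  then have "span (J ` B) = J ` L'" using linear_span_image[OF J] by simp
  then show "\<exists>B. finite B \<and> span B = J ` L'" using B(1) by blast
qed



definition lo_on :: "'a::real_normed_vector set \<Rightarrow> ('a \<Rightarrow> 'b::real_normed_vector) \<Rightarrow> real" where
  "lo_on M S = (INF m \<in> unit_sphere_of M. norm (S m))"

lemma tau_op_alt: "tau_op D S = (SUP M \<in> infdim_subspaces D. lo_on M S)"
  by (simp add: tau_op_def lo_on_def)

lemma sphere_bdd:
  fixes T :: "'a::real_normed_vector \<Rightarrow> 'b::real_normed_vector"
  assumes K: "\<And>x. norm (T x) \<le> K * norm x"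
  shows "bdd_above ((\<lambda>m. norm (T m)) ` unit_sphere_of L)" "bdd_below ((\<lambda>m. norm (T m)) ` unit_sphere_of L)"
    "\<And>m. m \<in> unit_sphere_of L \<Longrightarrow> norm (T m) \<le> K"
proof -
  show u: "\<And>m. m \<in> unit_sphere_of L \<Longrightarrow> norm (T m) \<le> K"
    using K unfolding unit_sphere_of_def by (metis (mono_tags, lifting) mem_Collect_eq mult.right_neutral)
  show "bdd_above ((\<lambda>m. norm (T m)) ` unit_sphere_of L)" using u by (intro bdd_aboveI2[where M=K])
  show "bdd_below ((\<lambda>m. norm (T m)) ` unit_sphere_of L)" by (intro bdd_belowI2[where m=0]) simp
qed

lemma op_lo_bounds:
  fixes T :: "'a::real_normed_vector \<Rightarrow> 'b::real_normed_vector"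
  assumes K: "\<And>x. norm (T x) \<le> K * norm x" and ne: "unit_sphere_of L \<noteq> {}"
  shows "0 \<le> opnorm_on L T" "opnorm_on L T \<le> K" "0 \<le> lo_on L T" "lo_on L T \<le> K"
    "lo_on L T \<le> opnorm_on L T"
proof -
  note b = sphere_bdd[OF K, where L=L]
  obtain m where m: "m \<in> unit_sphere_of L" using ne by blast
  show "0 \<le> opnorm_on L T" unfolding opnorm_on_def using b(1) m by (intro cSUP_upper2) auto
  show "opnorm_on L T \<le> K" unfolding opnorm_on_def using b(3) ne by (intro cSUP_least) auto
  show "0 \<le> lo_on L T" unfolding lo_on_def using ne by (intro cINF_greatest) auto
  show "lo_on L T \<le> K" unfolding lo_on_def using b(2,3) m by (intro cINF_lower2) auto
  have "lo_on L T \<le> norm (T m)" unfolding lo_on_def using b(2) m by (intro cINF_lower2) auto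
  also have "\<dots> \<le> opnorm_on L T" unfolding opnorm_on_def using b(1) m by (intro cSUP_upper2) auto
  finally show "lo_on L T \<le> opnorm_on L T" .
qed

lemma infdim_self:
  assumes "M \<in> infdim_subspaces D" shows "M \<in> infdim_subspaces M"
  using assms unfolding infdim_subspaces_def by auto

lemma infdim_sphere_ne:
  assumes "M \<in> infdim_subspaces D" shows "unit_sphere_of M \<noteq> {}"
  using assms unfolding infdim_subspaces_def by (intro unit_sphere_ne) auto

lemma pert_bounds:
  fixes T :: "'a::real_normed_vector \<Rightarrow> 'b::real_normed_vector" and J :: "'a \<Rightarrow> 'a"
  assumes lin: "linear T" and K: "\<And>x. norm (T x) \<le> K * norm x" and K0: "K \<ge> 0"
    and J: "linear J" and Jb: "\<And>m. m \<in> M' \<Longrightarrow> norm (J m - m) \<le> \<delta> * norm m"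
    and d: "0 < \<delta>" "\<delta> \<le> 1/2" and L: "subspace L'" "L' \<subseteq> M'" and ne: "unit_sphere_of L' \<noteq> {}"
  shows "opnorm_on (J ` L') T \<le> opnorm_on L' T + K * (4 * \<delta>)"
    "opnorm_on L' T \<le> opnorm_on (J ` L') T + K * (4 * \<delta>)"
    "lo_on (J ` L') T \<le> lo_on L' T + K * (4 * \<delta>)"
    "lo_on L' T \<le> lo_on (J ` L') T + K * (4 * \<delta>)"
proof -
  note c1 = sphere_close(1)[OF J Jb d L]
  note c2 = sphere_close(2)[OF J Jb d L]
  have ne2: "unit_sphere_of (J ` L') \<noteq> {}" using ne c2 by blast
  have u1: "\<And>b. b \<in> unit_sphere_of L' \<Longrightarrow> norm b = 1" unfolding unit_sphere_of_def by blast
  have u2: "\<And>b. b \<in> unit_sphere_of (J ` L') \<Longrightarrow> norm b = 1" unfolding unit_sphere_of_def by blast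
  show "opnorm_on (J ` L') T \<le> opnorm_on L' T + K * (4 * \<delta>)"
    unfolding opnorm_on_def using c1 by (intro sup_close[OF lin K K0 ne2 u1]) auto
  show "opnorm_on L' T \<le> opnorm_on (J ` L') T + K * (4 * \<delta>)"
    unfolding opnorm_on_def
  proof (intro sup_close[OF lin K K0 ne u2])
    fix a assume "a \<in> unit_sphere_of L'"
    then obtain n where "n \<in> unit_sphere_of (J ` L')" "norm (n - a) \<le> 4 * \<delta>" using c2 by blast
    then show "\<exists>b\<in>unit_sphere_of (J ` L'). norm (a - b) \<le> 4 * \<delta>" by (metis norm_minus_commute)
  qed
  show "lo_on (J ` L') T \<le> lo_on L' T + K * (4 * \<delta>)"
    unfolding lo_on_def using c2 by (intro inf_close[OF lin K K0 ne]) auto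
  show "lo_on L' T \<le> lo_on (J ` L') T + K * (4 * \<delta>)"
    unfolding lo_on_def
  proof (intro inf_close[OF lin K K0 ne2])
    fix b assume "b \<in> unit_sphere_of (J ` L')"
    then obtain u where "u \<in> unit_sphere_of L'" "norm (b - u) \<le> 4 * \<delta>" using c1 by blast
    then show "\<exists>a\<in>unit_sphere_of L'. norm (a - b) \<le> 4 * \<delta>" by (metis norm_minus_commute)
  qed
qed

lemma key:
  fixes T :: "'a::real_normed_vector \<Rightarrow> 'b::real_normed_vector" and E :: "'a set"
  assumes lin: "linear T" and K: "\<And>x. norm (T x) \<le> K * norm x" and K0: "K \<ge> 0"
    and E: "subspace E" and dense: "\<And>y e. e > 0 \<Longrightarrow> \<exists>z\<in>E. norm (z - y) < e"
    and M: "M \<in> infdim_subspaces UNIV" and eps: "\<epsilon> > 0"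
  shows "\<exists>N\<in>infdim_subspaces E. opnorm_on N T \<le> opnorm_on M T + \<epsilon> \<and> lo_on M T - \<epsilon> \<le> lo_on N T \<and>
     (\<forall>L\<in>infdim_subspaces N. \<exists>L'\<in>infdim_subspaces M. opnorm_on L' T - \<epsilon> \<le> opnorm_on L T \<and> lo_on L T \<le> lo_on L' T + \<epsilon>)"
proof -
  define \<delta> where "\<delta> = min (1/2) (\<epsilon> / (4 * K + 1))"
  have d1: "0 < \<delta>" unfolding \<delta>_def using eps K0 by auto
  have d2: "\<delta> \<le> 1/2" unfolding \<delta>_def by (rule min.cobounded1)
  note d = d1 d2
  have dK: "K * (4 * \<delta>) \<le> \<epsilon>"
  proof -
    have "\<delta> \<le> \<epsilon> / (4 * K + 1)" unfolding \<delta>_def by simp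
    then have "\<delta> * (4 * K + 1) \<le> \<epsilon>" using K0 by (simp add: pos_le_divide_eq)
    moreover have "K * (4 * \<delta>) \<le> \<delta> * (4 * K + 1)" using d by (simp add: algebra_simps)
    ultimately show ?thesis by linarith
  qed
  have Msub: "subspace M" and Minf: "\<not> (\<exists>B. finite B \<and> span B = M)"
    using M unfolding infdim_subspaces_def by auto
  obtain M' J where M': "subspace M'" "M' \<subseteq> M" "\<not> (\<exists>B. finite B \<and> span B = M')"
    and J: "linear J" "J ` M' \<subseteq> E" and Jb0: "\<forall>m\<in>M'. norm (J m - m) \<le> \<delta> * norm m"
    using transfer_map[OF Msub Minf dense E d(1)] by blast
  have Jb: "\<And>m. m \<in> M' \<Longrightarrow> norm (J m - m) \<le> \<delta> * norm m" using Jb0 by blast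
  have inj: "inj_on J M'"
  proof (rule inj_onI)
    fix a b assume ab: "a \<in> M'" "b \<in> M'" "J a = J b"
    have abM: "a - b \<in> M'" using ab M'(1) by (simp add: subspace_diff)
    have "J (a - b) = 0" using ab J(1) by (simp add: linear_diff)
    then have "norm (a - b) \<le> \<delta> * norm (a - b)" using Jb[OF abM] by (simp add: norm_minus_commute)
    then have "(1 - \<delta>) * norm (a - b) \<le> 0" by (simp add: algebra_simps)
    then have "norm (a - b) \<le> 0" using d by (simp add: mult_le_0_iff)
    then show "a = b" by simp
  qed
  define N where "N = J ` M'"
  have NE: "N \<in> infdim_subspaces E"
    unfolding infdim_subspaces_def N_def
    using linear_subspace_image[OF J(1) M'(1)] J(2) infdim_image[OF J(1) inj order.refl M'(1)] M'(3) by blast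
  have neM': "unit_sphere_of M' \<noteq> {}" using unit_sphere_ne[OF M'(1,3)] .
  note pb = pert_bounds[OF lin K K0 J(1) Jb d M'(1) order.refl neM']
  have sub: "unit_sphere_of M' \<subseteq> unit_sphere_of M" using M'(2) unfolding unit_sphere_of_def by auto
  have "opnorm_on M' T \<le> opnorm_on M T"
    unfolding opnorm_on_def using neM' sphere_bdd(1)[OF K] sub by (rule cSUP_subset_mono) auto
  then have op1: "opnorm_on N T \<le> opnorm_on M T + \<epsilon>" using pb(1) dK N_def by simp
  have "lo_on M T \<le> lo_on M' T"
    unfolding lo_on_def using neM' sphere_bdd(2)[OF K] sub by (rule cINF_superset_mono) auto
  then have lo1: "lo_on M T - \<epsilon> \<le> lo_on N T" using pb(4) dK N_def by simp
  have all: "\<exists>L'\<in>infdim_subspaces M. opnorm_on L' T - \<epsilon> \<le> opnorm_on L T \<and> lo_on L T \<le> lo_on L' T + \<epsilon>"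
    if L: "L \<in> infdim_subspaces N" for L
  proof -
    have Ls: "subspace L" "L \<subseteq> N" "\<not> (\<exists>B. finite B \<and> span B = L)" using L unfolding infdim_subspaces_def by auto
    define L' where "L' = {m \<in> M'. J m \<in> L}"
    have L'sub: "subspace L'" unfolding L'_def subspace_def
      using M'(1) Ls(1) J(1) by (auto simp: subspace_0 subspace_add subspace_scale linear_0 linear_add linear_scale)
    have L'M': "L' \<subseteq> M'" unfolding L'_def by auto
    have JL: "J ` L' = L" using Ls(2) unfolding L'_def N_def by auto
    have L'inf: "\<not> (\<exists>B. finite B \<and> span B = L')" using infdim_image[OF J(1) inj L'M' L'sub] JL Ls(3) by simp
    have L'I: "L' \<in> infdim_subspaces M" unfolding infdim_subspaces_def using L'sub L'M' M'(2) L'inf by auto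
    have neL': "unit_sphere_of L' \<noteq> {}" using unit_sphere_ne[OF L'sub L'inf] .
    note pb2 = pert_bounds[OF lin K K0 J(1) Jb d L'sub L'M' neL']
    show ?thesis using L'I pb2(2,3) dK JL by (intro bexI[of _ L']) auto
  qed
  show ?thesis using NE op1 lo1 all by blast
qed



theorem theorem1:
  fixes T :: "'a::real_normed_vector \<Rightarrow> 'b::real_normed_vector" and E :: "'a set"
  assumes "bounded_linear T"
    and "subspace E"
    and "{(x, T x) | x. True} \<subseteq> closure {(x, T x) | x. x \<in> E}"
  shows "Gamma_op E T = Gamma_op UNIV T \<and> Delta_op E T = Delta_op UNIV T
       \<and> tau_op E T = tau_op UNIV T \<and> nabla_op E T = nabla_op UNIV T"
proof -
  have lin: "linear T" using assms(1) bounded_linear.linear by blast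
  obtain K where Kp: "K > 0" and K': "\<And>x. norm (T x) \<le> norm x * K"
    using bounded_linear.pos_bounded[OF assms(1)] by blast
  have K: "\<And>x. norm (T x) \<le> K * norm x" using K' by (simp add: mult.commute)
  have K0: "K \<ge> 0" using Kp by simp
  have dense: "\<exists>z\<in>E. norm (z - y) < e" if e: "e > 0" for y e
  proof -
    have "(y, T y) \<in> closure {(x, T x) | x. x \<in> E}" using assms(3) by blast
    then obtain p where p: "p \<in> {(x, T x) | x. x \<in> E}" "dist p (y, T y) < e"
      using closure_approachable e by blast
    then obtain z where z: "z \<in> E" "p = (z, T z)" by blast
    have "dist z y \<le> dist p (y, T y)" using z(2) dist_fst_le[of p "(y, T y)"] by simp
    then show ?thesis using z(1) p(2) by (intro bexI[of _ z]) (auto simp: dist_norm)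
  qed
  define IE where "IE = infdim_subspaces E"
  define IX where "IX = infdim_subspaces (UNIV :: 'a set)"
  have IEX: "IE \<subseteq> IX" unfolding IE_def IX_def infdim_subspaces_def by auto
  note keyE = key[OF lin K K0 assms(2) dense]
  show ?thesis
  proof (cases "IX = {}")
    case True
    then have "IE = IX" using IEX by auto
    then have "infdim_subspaces E = infdim_subspaces (UNIV :: 'a set)" unfolding IE_def IX_def .
    then show ?thesis by (simp add: Gamma_op_def Delta_op_def tau_op_def nabla_op_def)
  next
    case False
    then obtain M0 where "M0 \<in> IX" by blast
    then obtain N0 where "N0 \<in> IE" using keyE[of M0 1] IX_def IE_def by auto
    then have IEne: "IE \<noteq> {}" by blast
    have opb: "0 \<le> opnorm_on M T \<and> opnorm_on M T \<le> K \<and> 0 \<le> lo_on M T \<and> lo_on M T \<le> K"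
      if "M \<in> infdim_subspaces D" for M and D :: "'a set"
      using op_lo_bounds[OF K infdim_sphere_ne[OF that]] by auto
    have Gb: "0 \<le> Gamma_op M T \<and> Gamma_op M T \<le> K" if "M \<in> infdim_subspaces D" for M and D :: "'a set"
    proof -
      have ne: "infdim_subspaces M \<noteq> {}" using infdim_self[OF that] by blast
      have "0 \<le> Gamma_op M T" unfolding Gamma_op_def using ne opb by (intro cINF_greatest) auto
      moreover have "Gamma_op M T \<le> K" unfolding Gamma_op_def using opb infdim_self[OF that]
        by (intro cINF_lower2[where x=M]) (auto intro!: bdd_belowI2[where m=0])
      ultimately show ?thesis by simp
    qed
    have tb: "0 \<le> tau_op M T \<and> tau_op M T \<le> K" if "M \<in> infdim_subspaces D" for M and D :: "'a set"
    proof -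
      have ne: "infdim_subspaces M \<noteq> {}" using infdim_self[OF that] by blast
      have "tau_op M T \<le> K" unfolding tau_op_alt using ne opb by (intro cSUP_least) auto
      moreover have "0 \<le> tau_op M T" unfolding tau_op_alt using opb infdim_self[OF that]
        by (intro cSUP_upper2[where x=M]) (auto intro!: bdd_aboveI2[where M=K])
      ultimately show ?thesis by simp
    qed
    have G1: "Gamma_op UNIV T \<le> Gamma_op E T"
      unfolding Gamma_op_def IE_def[symmetric] IX_def[symmetric]
      using IEne _ IEX by (rule cINF_superset_mono) (auto intro!: bdd_belowI2[where m=0] simp: IX_def opb)
    have G2: "Gamma_op E T \<le> Gamma_op UNIV T"
    proof (rule field_le_epsilon)
      fix e :: real assume e: "e > 0"
      have "(INF M\<in>IX. opnorm_on M T) < Gamma_op UNIV T + e/2" unfolding Gamma_op_def IX_def using e by simp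
      then obtain M where M: "M \<in> IX" "opnorm_on M T < Gamma_op UNIV T + e/2"
        using cInf_lessD[of "(\<lambda>M. opnorm_on M T) ` IX"] False by auto
      obtain N where N: "N \<in> IE" "opnorm_on N T \<le> opnorm_on M T + e/2"
        using keyE[of M "e/2"] M(1) e IX_def IE_def by auto
      have "Gamma_op E T \<le> opnorm_on N T" unfolding Gamma_op_def IE_def[symmetric]
        using N(1) by (intro cINF_lower2[where x=N]) (auto intro!: bdd_belowI2[where m=0] simp: IE_def opb)
      then show "Gamma_op E T \<le> Gamma_op UNIV T + e" using N M by simp
    qed
    have D1: "Delta_op E T \<le> Delta_op UNIV T"
      unfolding Delta_op_def IE_def[symmetric] IX_def[symmetric]
      using IEne _ IEX by (rule cSUP_subset_mono) (auto intro!: bdd_aboveI2[where M=K] simp: IX_def Gb)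
    have D2: "Delta_op UNIV T \<le> Delta_op E T"
    proof (rule field_le_epsilon)
      fix e :: real assume e: "e > 0"
      have "Delta_op UNIV T - e/2 < (SUP M\<in>IX. Gamma_op M T)" unfolding Delta_op_def IX_def using e by simp
      then obtain M where M: "M \<in> IX" "Delta_op UNIV T - e/2 < Gamma_op M T"
        using less_cSupD[of "(\<lambda>M. Gamma_op M T) ` IX"] False by auto
      obtain N where N: "N \<in> IE" and NL: "\<forall>L\<in>infdim_subspaces N. \<exists>L'\<in>infdim_subspaces M.
          opnorm_on L' T - e/2 \<le> opnorm_on L T \<and> lo_on L T \<le> lo_on L' T + e/2"
        using keyE[of M "e/2"] M(1) e IX_def IE_def by auto
      have "Gamma_op M T - e/2 \<le> Gamma_op N T"
        unfolding Gamma_op_def[of N]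
      proof (rule cINF_greatest)
        show "infdim_subspaces N \<noteq> {}" using infdim_self N(1) IE_def by blast
        fix L assume "L \<in> infdim_subspaces N"
        then obtain L' where L': "L' \<in> infdim_subspaces M" "opnorm_on L' T - e/2 \<le> opnorm_on L T" using NL by blast
        have "Gamma_op M T \<le> opnorm_on L' T" unfolding Gamma_op_def
          using L'(1) by (intro cINF_lower2[where x=L']) (auto intro!: bdd_belowI2[where m=0] simp: opb)
        then show "Gamma_op M T - e/2 \<le> opnorm_on L T" using L'(2) by simp
      qed
      moreover have "Gamma_op N T \<le> Delta_op E T" unfolding Delta_op_def IE_def[symmetric]
        using N(1) by (intro cSUP_upper2[where x=N]) (auto intro!: bdd_aboveI2[where M=K] simp: IE_def Gb)
      ultimately show "Delta_op UNIV T \<le> Delta_op E T + e" using M by simp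
    qed
    have T1: "tau_op E T \<le> tau_op UNIV T"
      unfolding tau_op_alt IE_def[symmetric] IX_def[symmetric]
      using IEne _ IEX by (rule cSUP_subset_mono) (auto intro!: bdd_aboveI2[where M=K] simp: IX_def opb)
    have T2: "tau_op UNIV T \<le> tau_op E T"
    proof (rule field_le_epsilon)
      fix e :: real assume e: "e > 0"
      have "tau_op UNIV T - e/2 < (SUP M\<in>IX. lo_on M T)" unfolding tau_op_alt IX_def using e by simp
      then obtain M where M: "M \<in> IX" "tau_op UNIV T - e/2 < lo_on M T"
        using less_cSupD[of "(\<lambda>M. lo_on M T) ` IX"] False by auto
      obtain N where N: "N \<in> IE" "lo_on M T - e/2 \<le> lo_on N T"
        using keyE[of M "e/2"] M(1) e IX_def IE_def by auto
      have "lo_on N T \<le> tau_op E T" unfolding tau_op_alt IE_def[symmetric]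
        using N(1) by (intro cSUP_upper2[where x=N]) (auto intro!: bdd_aboveI2[where M=K] simp: IE_def opb)
      then show "tau_op UNIV T \<le> tau_op E T + e" using N M by simp
    qed
    have N1: "nabla_op UNIV T \<le> nabla_op E T"
      unfolding nabla_op_def IE_def[symmetric] IX_def[symmetric]
      using IEne _ IEX by (rule cINF_superset_mono) (auto intro!: bdd_belowI2[where m=0] simp: IX_def tb)
    have N2: "nabla_op E T \<le> nabla_op UNIV T"
    proof (rule field_le_epsilon)
      fix e :: real assume e: "e > 0"
      have "(INF M\<in>IX. tau_op M T) < nabla_op UNIV T + e/2" unfolding nabla_op_def IX_def using e by simp
      then obtain M where M: "M \<in> IX" "tau_op M T < nabla_op UNIV T + e/2"
        using cInf_lessD[of "(\<lambda>M. tau_op M T) ` IX"] False by auto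
      obtain N where N: "N \<in> IE" and NL: "\<forall>L\<in>infdim_subspaces N. \<exists>L'\<in>infdim_subspaces M.
          opnorm_on L' T - e/2 \<le> opnorm_on L T \<and> lo_on L T \<le> lo_on L' T + e/2"
        using keyE[of M "e/2"] M(1) e IX_def IE_def by auto
      have "tau_op N T \<le> tau_op M T + e/2"
        unfolding tau_op_alt[of N]
      proof (rule cSUP_least)
        show "infdim_subspaces N \<noteq> {}" using infdim_self N(1) IE_def by blast
        fix L assume "L \<in> infdim_subspaces N"
        then obtain L' where L': "L' \<in> infdim_subspaces M" "lo_on L T \<le> lo_on L' T + e/2" using NL by blast
        have "lo_on L' T \<le> tau_op M T" unfolding tau_op_alt
          using L'(1) by (intro cSUP_upper2[where x=L']) (auto intro!: bdd_aboveI2[where M=K] simp: opb)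
        then show "lo_on L T \<le> tau_op M T + e/2" using L'(2) by simp
      qed
      moreover have "nabla_op E T \<le> tau_op N T" unfolding nabla_op_def IE_def[symmetric]
        using N(1) by (intro cINF_lower2[where x=N]) (auto intro!: bdd_belowI2[where m=0] simp: IE_def tb)
      ultimately show "nabla_op E T \<le> nabla_op UNIV T + e" using M by simp
    qed
    show ?thesis using G1 G2 D1 D2 T1 T2 N1 N2 by simp
  qed
qed


end
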